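(* Let $\kappa, m, n$ be positive integers such that $\kappa^4 m^4 n^4 - 32\kappa(m^2+n^2) = s^2$ for some integer $s$. Then \[ (\kappa m^2 - 2)(\kappa n^2 - 2) \leq 8. \] *)

theory Defs
  imports Main
begin

end

theory Submission imports Defs begin
lemma sq5: "(x::int)^2 mod 5 \<in> {0,1,4}"
proof -
  have "x mod 5 \<in> {0,1,2,3,4}" by auto
  moreover have "x^2 mod 5 = (x mod 5)^2 mod 5" by (simp add: power_mod)
  ultimately show ?thesis by auto
qed
lemma mod5_no: fixes a b :: int assumes "a mod 5 \<in> {0,1,4}" "b mod 5 \<in> {0,1,4}" "a*b - 1 = 8*(a+b)" shows False
proof -
  define i j u v where "i = a mod 5" "j = b mod 5" "u = a div 5" "v = b div 5"
  have a: "a = 5*u+i" and b: "b = 5*v+j" unfolding i_j_u_v_def by simp_all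
  have "i*j - 1 - 8*i - 8*j = 5*(8*u+8*v - 5*u*v - u*j - v*i)"
    using assms(3) unfolding a b by (simp add: algebra_simps)
  hence "5 dvd (i*j - 1 - 8*i - 8*j)" by simp
  thus False using assms(1,2) unfolding i_j_u_v_def[symmetric] by auto
qed
lemma sq8: "odd (p::int) \<Longrightarrow> p^2 mod 8 = 1"
proof -
  assume "odd p" then obtain q where q: "p = 2*q+1" by (metis oddE)
  have "even (q*(q+1))" by simp
  then obtain r where "q*(q+1) = 2*r" by blast
  hence "p^2 = 8*r+1" using q by (simp add: power2_eq_square algebra_simps)
  thus ?thesis by simp
qed
lemma sq4: "even (p::int) \<Longrightarrow> p^2 mod 4 = 0"
  by (auto elim!: evenE simp: power2_eq_square)

theorem lemma3:
  fixes \<kappa> m n s :: int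
  assumes "\<kappa> > 0" and "m > 0" and "n > 0"
    and "\<kappa>^4 * m^4 * n^4 - 32 * \<kappa> * (m^2 + n^2) = s^2"
  shows "(\<kappa> * m^2 - 2) * (\<kappa> * n^2 - 2) \<le> 8"
proof -
  define p where "p = \<kappa>*m*n"
  define A where "A = p^2"
  define X where "X = \<kappa>*(m^2+n^2)"
  define t where "t = \<bar>s\<bar>"
  have p0: "p > 0" unfolding p_def using assms by simp
  have A0: "A > 0" unfolding A_def using p0 by simp
  have X0: "X > 0" unfolding X_def using assms by (simp add: add_pos_pos)
  have t0: "t \<ge> 0" unfolding t_def by simp
  have eq: "A^2 - 32*X = t^2" unfolding A_def X_def t_def p_def using assms(4)
    by (simp add: algebra_simps power_mult_distrib flip: power_mult)
  have goal: "(\<kappa> * m^2 - 2) * (\<kappa> * n^2 - 2) = A - 2*X + 4"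
    unfolding A_def X_def p_def by (simp add: algebra_simps power_mult_distrib power2_eq_square)
  have "t^2 < A^2" using eq X0 by linarith
  hence tA: "t < A" using t0 A0 by (simp add: power_less_imp_less_base)
  have prod: "(A - t)*(A + t) = 32*X" using eq by (simp add: algebra_simps power2_eq_square)
  have "even (A - t)"
  proof (rule ccontr)
    assume o: "odd (A - t)"
    have "A + t = (A - t) + 2*t" by simp
    hence "odd (A + t)" using o by simp
    hence "odd ((A - t)*(A + t))" using o by simp
    thus False using prod by simp
  qed
  then obtain e where e: "A - t = 2*e" by (metis evenE)
  have key: "e*(A - e) = 8*X"
  proof -
    have "(2*e)*(2*A - 2*e) = 32*X" using prod e by (smt (verit))
    thus ?thesis by (simp add: algebra_simps)
  qed
  have e1: "e \<ge> 1" using tA e by linarith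
  have e2: "e \<le> A - e" using t0 e by linarith
  consider "e = 1" | "e = 2" | "e = 3" | "e \<ge> 4" using e1 by linarith
  thus ?thesis
  proof cases
    case 1
    hence h: "\<kappa> * (\<kappa>*(m^2*n^2)) - 1 = \<kappa> * (8*(m^2+n^2))"
      using key unfolding A_def p_def X_def by (simp add: algebra_simps power_mult_distrib power2_eq_square)
    have "\<kappa> dvd 1"
    proof -
      have "1 = \<kappa> * (\<kappa>*(m^2*n^2)) - \<kappa> * (8*(m^2+n^2))" using h by linarith
      also have "\<dots> = \<kappa> * (\<kappa>*(m^2*n^2) - 8*(m^2+n^2))" by (simp add: algebra_simps)
      finally show ?thesis by (metis dvd_triv_left)
    qed
    hence k1: "\<kappa> = 1" using assms(1) by (simp add: zdvd1_eq) 
    have "m^2*n^2 - 1 = 8*(m^2+n^2)" using h k1 by simp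
    with mod5_no[OF sq5 sq5] show ?thesis by blast
  next
    case 2
    hence h: "A = 4*X + 2" using key by simp
    show ?thesis
    proof (cases "even p")
      case True
      then have "A mod 4 = 0" unfolding A_def by (rule sq4)
      thus ?thesis using h by simp
    next
      case False
      then have "A mod 8 = 1" unfolding A_def by (rule sq8)
      thus ?thesis using h by presburger
    qed
  next
    case 3
    hence h: "3*A - 9 = 8*X" using key by (simp add: algebra_simps)
    show ?thesis
    proof (cases "even p")
      case True
      then have "A mod 4 = 0" unfolding A_def by (rule sq4)
      thus ?thesis using h by presburger
    next
      case False
      then have "A mod 8 = 1" unfolding A_def by (rule sq8)
      thus ?thesis using h by presburger
    qed
  next
    case 4
    have "(e - 4)*(A - e - 4) \<ge> 0" using 4 e2 by simp
    hence "e*(A-e) - 4*(A - 4) \<ge> 0" by (simp add: algebra_simps)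
    hence "8*X - 4*(A - 4) \<ge> 0" by (simp only: key)
    hence "A - 2*X + 4 \<le> 8" by presburger
    thus ?thesis using goal by simp
  qed
qed

end
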